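(* An algebra $(A,\circ,-,\sqcup)$ is a minus-algebra with override if and only if it satisfies all the defining laws of a minus-algebra with override except the quasi-identity $s-x=t-x\ \&\ x\circ s=x\circ t\Rightarrow s=t$, together with the identity $x=(y\circ x)\sqcup(x-y)$. Hence the class of minus-algebras with override is a finitely based variety, and so is the class of minus-semigroups with override (obtained by further adding an associative operation $\cdot$ and the identity $s(t-u)=st-su$).
   Context: A minus-algebra $(A,\circ,-)$ satisfies: $x\circ y=y-(y-x)$; $(A,\circ)$ is a right normal band (semigroup with $x\circ x=x$, $(x\circ y)\circ z=(y\circ x)\circ z$); there is an element $0$ with $x-x=0$ for all $x$; $x\circ0=0\circ x=0$; $(x-y)\circ x=x-y$; $(x-y)\circ y=0$; $(x-y)\circ z=(x\circ z)-y$; and the quasi-identity $s-x=t-x\ \&\ x\circ s=x\circ t\Rightarrow s=t$. A minus-algebra with override is a minus-algebra with a binary operation $\sqcup$ satisfying $(x\sqcup y)-x=y-x$ and $x\circ(x\sqcup y)=x$. A minus-semigroup with override is a minus-algebra with override with an associative operation $\cdot$ (juxtaposition) satisfying $s(t-u)=st-su$. *)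

theory Defs
  imports Main
begin

text \<open>An algebra is given on the whole of a type 'a by its operations:
  c = composition (circ), m = minus, j = override (sqcup), p = multiplication.\<close>

definition minus_algebra_laws :: "('a \<Rightarrow> 'a \<Rightarrow> 'a) \<Rightarrow> ('a \<Rightarrow> 'a \<Rightarrow> 'a) \<Rightarrow> bool" where
  "minus_algebra_laws c m \<longleftrightarrow>
     (\<forall>x y. c x y = m y (m y x)) \<and>
     (\<forall>x y z. c (c x y) z = c x (c y z)) \<and>
     (\<forall>x. c x x = x) \<and>
     (\<forall>x y z. c (c x y) z = c (c y x) z) \<and>
     (\<exists>e. (\<forall>x. m x x = e) \<and>
          (\<forall>x. c x e = e \<and> c e x = e) \<and>
          (\<forall>x y. c (m x y) x = m x y) \<and>
          (\<forall>x y. c (m x y) y = e) \<and>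
          (\<forall>x y z. c (m x y) z = m (c x z) y))"

definition minus_quasi_identity :: "('a \<Rightarrow> 'a \<Rightarrow> 'a) \<Rightarrow> ('a \<Rightarrow> 'a \<Rightarrow> 'a) \<Rightarrow> bool" where
  "minus_quasi_identity c m \<longleftrightarrow>
     (\<forall>s t x. m s x = m t x \<and> c x s = c x t \<longrightarrow> s = t)"

definition minus_algebra :: "('a \<Rightarrow> 'a \<Rightarrow> 'a) \<Rightarrow> ('a \<Rightarrow> 'a \<Rightarrow> 'a) \<Rightarrow> bool" where
  "minus_algebra c m \<longleftrightarrow> minus_algebra_laws c m \<and> minus_quasi_identity c m"

definition override_laws ::
  "('a \<Rightarrow> 'a \<Rightarrow> 'a) \<Rightarrow> ('a \<Rightarrow> 'a \<Rightarrow> 'a) \<Rightarrow> ('a \<Rightarrow> 'a \<Rightarrow> 'a) \<Rightarrow> bool" where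
  "override_laws c m j \<longleftrightarrow>
     (\<forall>x y. m (j x y) x = m y x) \<and> (\<forall>x y. c x (j x y) = x)"

definition minus_algebra_with_override ::
  "('a \<Rightarrow> 'a \<Rightarrow> 'a) \<Rightarrow> ('a \<Rightarrow> 'a \<Rightarrow> 'a) \<Rightarrow> ('a \<Rightarrow> 'a \<Rightarrow> 'a) \<Rightarrow> bool" where
  "minus_algebra_with_override c m j \<longleftrightarrow> minus_algebra c m \<and> override_laws c m j"

definition semigroup_minus_laws ::
  "('a \<Rightarrow> 'a \<Rightarrow> 'a) \<Rightarrow> ('a \<Rightarrow> 'a \<Rightarrow> 'a) \<Rightarrow> bool" where
  "semigroup_minus_laws m p \<longleftrightarrow>
     (\<forall>x y z. p (p x y) z = p x (p y z)) \<and>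
     (\<forall>s t u. p s (m t u) = m (p s t) (p s u))"

definition minus_semigroup_with_override ::
  "('a \<Rightarrow> 'a \<Rightarrow> 'a) \<Rightarrow> ('a \<Rightarrow> 'a \<Rightarrow> 'a) \<Rightarrow> ('a \<Rightarrow> 'a \<Rightarrow> 'a) \<Rightarrow> ('a \<Rightarrow> 'a \<Rightarrow> 'a) \<Rightarrow> bool" where
  "minus_semigroup_with_override c m j p \<longleftrightarrow>
     minus_algebra_with_override c m j \<and> semigroup_minus_laws m p"

end

theory Submission
  imports Defs
begin

locale MA =
  fixes c m :: "'a \<Rightarrow> 'a \<Rightarrow> 'a" and e :: 'a
  assumes cd: "\<And>x y. c x y = m y (m y x)"
  and ca: "\<And>x y z. c (c x y) z = c x (c y z)"
  and ci: "\<And>x. c x x = x"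
  and cn: "\<And>x y z. c (c x y) z = c (c y x) z"
  and mz: "\<And>x. m x x = e"
  and z1: "\<And>x. c x e = e" and z2: "\<And>x. c e x = e"
  and m1: "\<And>x y. c (m x y) x = m x y"
  and m2: "\<And>x y. c (m x y) y = e"
  and m3: "\<And>x y z. c (m x y) z = m (c x z) y"
  and q: "\<And>s t x. m s x = m t x \<Longrightarrow> c x s = c x t \<Longrightarrow> s = t"
begin
lemma L1: "m x (c y x) = m (m x y) (c y x)"
  by (metis cd ci cn m3)
end

lemma main_dir:
  assumes A: "minus_algebra c m" and O: "override_laws c m j"
  shows "x = j (c y x) (m x y)"
proof -
  obtain e where "MA c m e"
    using A unfolding minus_algebra_def minus_algebra_laws_def minus_quasi_identity_def MA_def
    by metis
  then have L: "m x (c y x) = m (m x y) (c y x)" by (rule MA.L1)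
  have o1: "\<And>x y. m (j x y) x = m y x" and o2: "\<And>x y. c x (j x y) = x"
    using O unfolding override_laws_def by auto
  have Q: "\<And>s t x. m s x = m t x \<Longrightarrow> c x s = c x t \<Longrightarrow> s = t"
    using A unfolding minus_algebra_def minus_quasi_identity_def by blast
  have ca: "\<And>x y z. c (c x y) z = c x (c y z)" and ci: "\<And>x. c x x = x"
    using A unfolding minus_algebra_def minus_algebra_laws_def by auto
  show ?thesis
  proof (rule Q[of _ "c y x"])
    show "m x (c y x) = m (j (c y x) (m x y)) (c y x)" using L o1 by simp
    show "c (c y x) x = c (c y x) (j (c y x) (m x y))" using o2 ca ci by metis
  qed
qed

lemma back_dir:
  assumes O: "override_laws c m j" and I: "\<forall>x y. x = j (c y x) (m x y)"
  shows "minus_quasi_identity c m"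
  unfolding minus_quasi_identity_def
proof (intro allI impI)
  fix s t x assume "m s x = m t x \<and> c x s = c x t"
  then show "s = t" using I by metis
qed

theorem proposition5p4:
  fixes c m j p :: "'a \<Rightarrow> 'a \<Rightarrow> 'a"
  shows "(minus_algebra_with_override c m j \<longleftrightarrow>
            minus_algebra_laws c m \<and> override_laws c m j \<and>
            (\<forall>x y. x = j (c y x) (m x y)))
       \<and> (minus_semigroup_with_override c m j p \<longleftrightarrow>
            minus_algebra_laws c m \<and> override_laws c m j \<and>
            (\<forall>x y. x = j (c y x) (m x y)) \<and> semigroup_minus_laws m p)"
proof -
  have 1: "minus_algebra_with_override c m j \<longleftrightarrow>
            minus_algebra_laws c m \<and> override_laws c m j \<and>
            (\<forall>x y. x = j (c y x) (m x y))"
    using main_dir back_dir unfolding minus_algebra_with_override_def minus_algebra_def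
    by metis
  show ?thesis using 1 unfolding minus_semigroup_with_override_def by blast
qed

end
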